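(* Let $R=\bigoplus_{\alpha\in\Gamma}R_{\alpha}$ be a graded integral domain and $\star$ a semistar operation on $R$. Then $N(\star):=\{f\in R[X]: f\neq0\text{ and }A_f^{\star}=R^{\star}\}$ is a saturated multiplicatively closed subset of $R[X]$.
   Context: $\Gamma$ is a commutative cancellative monoid (written additively) whose quotient group $\langle\Gamma\rangle$ is torsion-free. A graded integral domain $R=\bigoplus_{\alpha\in\Gamma}R_\alpha$ is an integral domain that is the direct sum of additive subgroups $R_\alpha$ with $R_\alpha R_\beta\subseteq R_{\alpha+\beta}$, with quotient field $K$. For $a\in R$, $C(a)$ is the ideal of $R$ generated by the homogeneous components of $a$; for $f=f_0+\cdots+f_nX^n\in R[X]$, $A_f:=\sum_i C(f_i)$. A semistar operation on $R$ is a map $\star$ from the set of nonzero $R$-submodules of $K$ to itself such that for all $0\ne x\in K$ and $E,F$: $(xE)^\star=xE^\star$; $E\subseteq F\Rightarrow E^\star\subseteq F^\star$; $E\subseteq E^\star$; $(E^\star)^\star=E^\star$. *)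

theory Defs
  imports "HOL-Computational_Algebra.Polynomial"
begin

text \<open>The ambient field K is a type 'k of class field; R is a subset of it.
  The grading monoid Gamma is a type 'g of class cancel_comm_monoid_add.\<close>

definition nsmul :: "nat \<Rightarrow> 'g::monoid_add \<Rightarrow> 'g" where
  "nsmul n a = (((+) a) ^^ n) 0"

text \<open>The quotient group of a cancellative commutative monoid is torsion-free iff
  n a = n b with n > 0 implies a = b.\<close>
definition torsion_free_quotient :: "'g::cancel_comm_monoid_add itself \<Rightarrow> bool" where
  "torsion_free_quotient _ \<longleftrightarrow>
     (\<forall>(n::nat) (a::'g) b. n > 0 \<longrightarrow> nsmul n a = nsmul n b \<longrightarrow> a = b)"

definition hom_family :: "('g \<Rightarrow> 'k::field set) \<Rightarrow> ('g \<Rightarrow> 'k) \<Rightarrow> bool" where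
  "hom_family Rg h \<longleftrightarrow> (\<forall>\<beta>. h \<beta> \<in> Rg \<beta>) \<and> finite {\<beta>. h \<beta> \<noteq> 0}"

definition hsum :: "('g \<Rightarrow> 'k::field) \<Rightarrow> 'k" where
  "hsum h = (\<Sum>\<beta>\<in>{\<beta>. h \<beta> \<noteq> 0}. h \<beta>)"

text \<open>R = direct sum of the R_alpha, R a graded integral domain with quotient field K
  (the whole type 'k).\<close>
definition graded_domain :: "('g::cancel_comm_monoid_add \<Rightarrow> 'k::field set) \<Rightarrow> 'k set \<Rightarrow> bool" where
  "graded_domain Rg R \<longleftrightarrow>
     (\<forall>\<alpha>. 0 \<in> Rg \<alpha> \<and> (\<forall>x\<in>Rg \<alpha>. \<forall>y\<in>Rg \<alpha>. x + y \<in> Rg \<alpha>) \<and> (\<forall>x\<in>Rg \<alpha>. - x \<in> Rg \<alpha>)) \<and>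
     (\<forall>\<alpha> \<beta>. \<forall>x\<in>Rg \<alpha>. \<forall>y\<in>Rg \<beta>. x * y \<in> Rg (\<alpha> + \<beta>)) \<and>
     (\<forall>h. hom_family Rg h \<and> hsum h = 0 \<longrightarrow> (\<forall>\<beta>. h \<beta> = 0)) \<and>
     R = {hsum h | h. hom_family Rg h} \<and>
     1 \<in> R \<and>
     (\<forall>z. \<exists>a\<in>R. \<exists>b\<in>R. b \<noteq> 0 \<and> z = a / b)"

text \<open>The alpha-homogeneous component of a (unique by directness).\<close>
definition hcomp :: "('g \<Rightarrow> 'k::field set) \<Rightarrow> 'k \<Rightarrow> 'g \<Rightarrow> 'k" where
  "hcomp Rg a \<alpha> = (THE x. \<exists>h. hom_family Rg h \<and> a = hsum h \<and> x = h \<alpha>)"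

definition gen_ideal :: "'k::field set \<Rightarrow> 'k set \<Rightarrow> 'k set" where
  "gen_ideal R S = {x. \<exists>F c. finite F \<and> F \<subseteq> S \<and> (\<forall>s\<in>F. c s \<in> R) \<and> x = (\<Sum>s\<in>F. c s * s)}"

definition Cont :: "('g \<Rightarrow> 'k::field set) \<Rightarrow> 'k set \<Rightarrow> 'k \<Rightarrow> 'k set" where
  "Cont Rg R a = gen_ideal R {hcomp Rg a \<alpha> | \<alpha>. True}"

text \<open>A_f = sum of C(f_i) = ideal generated by all homogeneous components of all coefficients.\<close>
definition Af :: "('g \<Rightarrow> 'k::field set) \<Rightarrow> 'k set \<Rightarrow> 'k poly \<Rightarrow> 'k set" where
  "Af Rg R f = gen_ideal R {hcomp Rg (coeff f i) \<alpha> | i \<alpha>. True}"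

definition Rpoly :: "'k::field set \<Rightarrow> 'k poly set" where
  "Rpoly R = {f. \<forall>i. coeff f i \<in> R}"

definition nz_submod :: "'k::field set \<Rightarrow> 'k set \<Rightarrow> bool" where
  "nz_submod R E \<longleftrightarrow> 0 \<in> E \<and> (\<forall>x\<in>E. \<forall>y\<in>E. x + y \<in> E) \<and> (\<forall>r\<in>R. \<forall>x\<in>E. r * x \<in> E) \<and> E \<noteq> {0}"

definition semistar :: "'k::field set \<Rightarrow> ('k set \<Rightarrow> 'k set) \<Rightarrow> bool" where
  "semistar R st \<longleftrightarrow>
     (\<forall>E. nz_submod R E \<longrightarrow> nz_submod R (st E)) \<and>
     (\<forall>x E. x \<noteq> 0 \<longrightarrow> nz_submod R E \<longrightarrow> st ((*) x ` E) = (*) x ` st E) \<and>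
     (\<forall>E F. nz_submod R E \<longrightarrow> nz_submod R F \<longrightarrow> E \<subseteq> F \<longrightarrow> st E \<subseteq> st F) \<and>
     (\<forall>E. nz_submod R E \<longrightarrow> E \<subseteq> st E) \<and>
     (\<forall>E. nz_submod R E \<longrightarrow> st (st E) = st E)"

definition Nstar :: "('g \<Rightarrow> 'k::field set) \<Rightarrow> 'k set \<Rightarrow> ('k set \<Rightarrow> 'k set) \<Rightarrow> 'k poly set" where
  "Nstar Rg R st = {f \<in> Rpoly R. f \<noteq> 0 \<and> st (Af Rg R f) = st R}"

definition saturated_mult_closed :: "'a::comm_ring_1 set \<Rightarrow> 'a set \<Rightarrow> bool" where
  "saturated_mult_closed A S \<longleftrightarrow> S \<subseteq> A \<and> 1 \<in> S \<and>
     (\<forall>f\<in>A. \<forall>g\<in>A. f * g \<in> S \<longleftrightarrow> f \<in> S \<and> g \<in> S)"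

end

theory Submission
  imports Defs "HOL-Library.Product_Plus"
begin
lemma nsmul_0[simp]: "nsmul 0 a = 0" by (simp add: nsmul_def)
lemma nsmul_Suc[simp]: "nsmul (Suc n) a = a + nsmul n a" by (simp add: nsmul_def)
lemma nsmul_1[simp]: "nsmul 1 a = (a::'g::monoid_add)" by simp
lemma nsmul_add_n: "nsmul (m+n) (a::'g::comm_monoid_add) = nsmul m a + nsmul n a"
  by (induct m) (simp_all add: ac_simps)
lemma nsmul_add: "nsmul n ((a::'g::comm_monoid_add)+b) = nsmul n a + nsmul n b"
  by (induct n) (simp_all add: ac_simps)
lemma nsmul_nsmul: "nsmul m (nsmul n (a::'g::comm_monoid_add)) = nsmul (m*n) a"
  by (induct m) (simp_all add: nsmul_add_n)


definition goodrel :: "('g::cancel_comm_monoid_add \<times> 'g) set \<Rightarrow> bool" where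
 "goodrel r \<longleftrightarrow> (\<forall>a. (a,a)\<in>r) \<and> (\<forall>a b c. (a,b)\<in>r \<longrightarrow> (b,c)\<in>r \<longrightarrow> (a,c)\<in>r)
   \<and> (\<forall>a b. (a,b)\<in>r \<longrightarrow> (b,a)\<in>r \<longrightarrow> a=b) \<and> (\<forall>a b c. (a,b)\<in>r \<longrightarrow> (a+c,b+c)\<in>r)
   \<and> (\<forall>a b c. (a+c,b+c)\<in>r \<longrightarrow> (a,b)\<in>r)
   \<and> (\<forall>n a b. n>0 \<longrightarrow> (nsmul n a, nsmul n b)\<in>r \<longrightarrow> (a,b)\<in>r)"

context fixes r :: "('g::cancel_comm_monoid_add \<times> 'g) set" assumes g: "goodrel r" begin
lemma gr_refl: "(a,a)\<in>r" using g unfolding goodrel_def by simp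
lemma gr_trans: "(a,b)\<in>r \<Longrightarrow> (b,c)\<in>r \<Longrightarrow> (a,c)\<in>r" using g unfolding goodrel_def by metis
lemma gr_antisym: "(a,b)\<in>r \<Longrightarrow> (b,a)\<in>r \<Longrightarrow> a=b" using g unfolding goodrel_def by metis
lemma gr_compat: "(a,b)\<in>r \<Longrightarrow> (a+c,b+c)\<in>r" using g unfolding goodrel_def by metis
lemma gr_cancel: "(a+c,b+c)\<in>r \<Longrightarrow> (a,b)\<in>r" using g unfolding goodrel_def by metis
lemma gr_tor: "n>0 \<Longrightarrow> (nsmul n a, nsmul n b)\<in>r \<Longrightarrow> (a,b)\<in>r" using g unfolding goodrel_def by metis

lemma gr_add_mono: "(a,b)\<in>r \<Longrightarrow> (c,d)\<in>r \<Longrightarrow> (a+c,b+d)\<in>r"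
proof -
  assume "(a,b)\<in>r" "(c,d)\<in>r"
  then have "(a+c,b+c)\<in>r" "(c+b,d+b)\<in>r" by (auto intro: gr_compat)
  then show ?thesis by (metis gr_trans add.commute)
qed
lemma gr_scale: "(a,b)\<in>r \<Longrightarrow> (nsmul n a, nsmul n b)\<in>r"
  by (induct n) (simp_all add: gr_refl gr_add_mono)
end

lemma goodrelI:
  assumes "\<And>a. (a,a)\<in>r" "\<And>a b c. (a,b)\<in>r \<Longrightarrow> (b,c)\<in>r \<Longrightarrow> (a,c)\<in>r"
   "\<And>a b. (a,b)\<in>r \<Longrightarrow> (b,a)\<in>r \<Longrightarrow> a=b" "\<And>a b c. (a,b)\<in>r \<Longrightarrow> (a+c,b+c)\<in>r"
   "\<And>a b c. (a+c,b+c)\<in>r \<Longrightarrow> (a,b)\<in>r"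
   "\<And>n a b. n>0 \<Longrightarrow> (nsmul n a, nsmul n b)\<in>r \<Longrightarrow> (a,b)\<in>r"
  shows "goodrel r"
  unfolding goodrel_def using assms by blast
definition extrel where
  "extrel r a b = {(x,y). \<exists>n k. n>0 \<and> (nsmul n x + nsmul k b, nsmul n y + nsmul k a) \<in> r}"

lemma extrelI: "n>0 \<Longrightarrow> (nsmul n x + nsmul k b, nsmul n y + nsmul k a) \<in> r \<Longrightarrow> (x,y) \<in> extrel r a b"
  unfolding extrel_def by blast

lemma extrel_good:
  fixes r :: "('g::cancel_comm_monoid_add \<times> 'g) set"
  assumes g: "goodrel r" and ab: "(a,b)\<notin>r" "(b,a)\<notin>r"
  shows "goodrel (extrel r a b)" "r \<subseteq> extrel r a b" "(a,b) \<in> extrel r a b"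
proof -
  have refl: "\<And>x. (x,x)\<in>r" using gr_refl[OF g] by blast
  show "r \<subseteq> extrel r a b"
  proof (rule subrelI)
    fix x y assume "(x,y) \<in> r"
    then show "(x,y) \<in> extrel r a b" by (intro extrelI[of 1 _ 0]) simp_all
  qed
  have "(nsmul 1 a + nsmul 1 b, nsmul 1 b + nsmul 1 a) \<in> r"
    using refl[of "a+b"] by (simp add: add.commute)
  then show "(a,b) \<in> extrel r a b" by (intro extrelI[of 1 _ 1]) simp_all
  have trans: "(x,z) \<in> extrel r a b" if T: "(x,y) \<in> extrel r a b" "(y,z) \<in> extrel r a b" for x y z
  proof -
    obtain n k where n: "n>0" "(nsmul n x + nsmul k b, nsmul n y + nsmul k a) \<in> r"
      using T(1) unfolding extrel_def by blast
    obtain n' k' where n': "n'>0" "(nsmul n' y + nsmul k' b, nsmul n' z + nsmul k' a) \<in> r"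
      using T(2) unfolding extrel_def by blast
    have "(nsmul n' (nsmul n x + nsmul k b) + nsmul n (nsmul n' y + nsmul k' b),
           nsmul n' (nsmul n y + nsmul k a) + nsmul n (nsmul n' z + nsmul k' a)) \<in> r"
      by (intro gr_add_mono[OF g] gr_scale[OF g] n n')
    also have "nsmul n' (nsmul n x + nsmul k b) + nsmul n (nsmul n' y + nsmul k' b)
       = (nsmul (n'*n) x + nsmul (n'*k+n*k') b) + nsmul (n*n') y"
      by (simp add: nsmul_add nsmul_nsmul nsmul_add_n ac_simps)
    also have "nsmul n' (nsmul n y + nsmul k a) + nsmul n (nsmul n' z + nsmul k' a)
       = (nsmul (n'*n) z + nsmul (n'*k+n*k') a) + nsmul (n*n') y"
      by (simp add: nsmul_add nsmul_nsmul nsmul_add_n ac_simps)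
    finally have "(nsmul (n'*n) x + nsmul (n'*k+n*k') b, nsmul (n'*n) z + nsmul (n'*k+n*k') a) \<in> r"
      by (rule gr_cancel[OF g])
    then show ?thesis using n n' by (intro extrelI[of "n'*n"]) simp_all
  qed
  have antisym: "x = y" if T: "(x,y) \<in> extrel r a b" "(y,x) \<in> extrel r a b" for x y
  proof -
    obtain n k where n: "n>0" "(nsmul n x + nsmul k b, nsmul n y + nsmul k a) \<in> r"
      using T(1) unfolding extrel_def by blast
    obtain n' k' where n': "n'>0" "(nsmul n' y + nsmul k' b, nsmul n' x + nsmul k' a) \<in> r"
      using T(2) unfolding extrel_def by blast
    have "(nsmul n' (nsmul n x + nsmul k b) + nsmul n (nsmul n' y + nsmul k' b),
           nsmul n' (nsmul n y + nsmul k a) + nsmul n (nsmul n' x + nsmul k' a)) \<in> r"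
      by (intro gr_add_mono[OF g] gr_scale[OF g] n n')
    also have "nsmul n' (nsmul n x + nsmul k b) + nsmul n (nsmul n' y + nsmul k' b)
       = nsmul (n'*k+n*k') b + (nsmul (n*n') x + nsmul (n*n') y)"
      by (simp add: nsmul_add nsmul_nsmul nsmul_add_n ac_simps)
    also have "nsmul n' (nsmul n y + nsmul k a) + nsmul n (nsmul n' x + nsmul k' a)
       = nsmul (n'*k+n*k') a + (nsmul (n*n') x + nsmul (n*n') y)"
      by (simp add: nsmul_add nsmul_nsmul nsmul_add_n ac_simps)
    finally have K: "(nsmul (n'*k+n*k') b, nsmul (n'*k+n*k') a) \<in> r"
      by (rule gr_cancel[OF g])
    show ?thesis
    proof (cases "n'*k+n*k' > 0")
      case True
      then have "(b,a)\<in>r" using K by (rule gr_tor[OF g])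
      with ab show ?thesis by simp
    next
      case False
      then have "n'*k + n*k' = 0" by simp
      then have "n'*k = 0" "n*k' = 0" by simp_all
      then have k0: "k = 0" "k' = 0" using n(1) n'(1) by simp_all
      have "(nsmul n x, nsmul n y) \<in> r" using n(2) k0 by simp
      then have xy: "(x,y)\<in>r" by (rule gr_tor[OF g n(1)])
      have "(nsmul n' y, nsmul n' x) \<in> r" using n'(2) k0 by simp
      then have "(y,x)\<in>r" by (rule gr_tor[OF g n'(1)])
      then show ?thesis using gr_antisym[OF g xy] by blast
    qed
  qed
  have compat: "(x+c,y+c) \<in> extrel r a b" if T: "(x,y) \<in> extrel r a b" for x y c
  proof -
    obtain n k where n: "n>0" "(nsmul n x + nsmul k b, nsmul n y + nsmul k a) \<in> r"
      using T(1) unfolding extrel_def by blast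
    then have "((nsmul n x + nsmul k b) + nsmul n c, (nsmul n y + nsmul k a) + nsmul n c) \<in> r"
      using gr_compat[OF g] by blast
    moreover have "(nsmul n x + nsmul k b) + nsmul n c = nsmul n (x+c) + nsmul k b"
      "(nsmul n y + nsmul k a) + nsmul n c = nsmul n (y+c) + nsmul k a"
      by (simp_all add: nsmul_add ac_simps)
    ultimately show ?thesis using n(1) by (intro extrelI[of n]) simp_all
  qed
  have canc: "(x,y) \<in> extrel r a b" if T: "(x+c,y+c) \<in> extrel r a b" for x y c
  proof -
    obtain n k where n: "n>0" "(nsmul n (x+c) + nsmul k b, nsmul n (y+c) + nsmul k a) \<in> r"
      using T(1) unfolding extrel_def by blast
    then have "((nsmul n x + nsmul k b) + nsmul n c, (nsmul n y + nsmul k a) + nsmul n c) \<in> r"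
      by (simp add: nsmul_add ac_simps)
    then have "((nsmul n x + nsmul k b), (nsmul n y + nsmul k a)) \<in> r"
      by (rule gr_cancel[OF g])
    then show ?thesis using n(1) by (intro extrelI[of n]) simp_all
  qed
  have tor: "(x,y) \<in> extrel r a b" if T: "m>0" "(nsmul m x, nsmul m y) \<in> extrel r a b" for x y m
  proof -
    obtain n k where n: "n>0" "(nsmul n (nsmul m x) + nsmul k b, nsmul n (nsmul m y) + nsmul k a) \<in> r"
      using T(2) unfolding extrel_def by blast
    then show ?thesis using T(1) n(1) by (intro extrelI[of "n*m"]) (simp_all add: nsmul_nsmul)
  qed
  have rf: "(x,x) \<in> extrel r a b" for x
    using \<open>r \<subseteq> extrel r a b\<close> refl by blast
  show "goodrel (extrel r a b)"
    apply (rule goodrelI)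
    subgoal by (rule rf)
    subgoal by (rule trans)
    subgoal by (rule antisym)
    subgoal by (rule compat)
    subgoal by (rule canc)
    subgoal by (rule tor)
    done
qed

lemma goodrel_Id:
  assumes tf: "\<forall>(n::nat) (a::'g::cancel_comm_monoid_add) b. n > 0 \<longrightarrow> nsmul n a = nsmul n b \<longrightarrow> a = b"
  shows "goodrel (Id::('g\<times>'g) set)"
proof (rule goodrelI)
  fix n and a b :: 'g assume "n>0" "(nsmul n a, nsmul n b) \<in> Id"
  then show "(a,b)\<in>Id" using tf by simp
qed simp_all

lemma goodrel_Union:
  assumes CA: "\<And>X. X \<in> C \<Longrightarrow> goodrel X" and ch: "\<And>X Y. X \<in> C \<Longrightarrow> Y \<in> C \<Longrightarrow> X \<subseteq> Y \<or> Y \<subseteq> X"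
   and ne: "C \<noteq> {}"
  shows "goodrel (\<Union>C)"
proof (rule goodrelI)
  fix a
  from ne obtain X where "X \<in> C" by blast
  then have "(a,a) \<in> X" using gr_refl[OF CA] by blast
  then show "(a,a)\<in>\<Union>C" using \<open>X\<in>C\<close> by blast
next
  fix a b c assume "(a,b)\<in>\<Union>C" "(b,c)\<in>\<Union>C"
  then obtain X Y where XY: "X\<in>C" "Y\<in>C" "(a,b)\<in>X" "(b,c)\<in>Y" by blast
  show "(a,c)\<in>\<Union>C"
  proof (cases "X \<subseteq> Y")
    case True
    then have "(a,c) \<in> Y" using gr_trans[OF CA[OF XY(2)]] XY by blast
    then show ?thesis using XY by blast
  next
    case False
    then have "Y \<subseteq> X" using ch XY by blast
    then have "(a,c) \<in> X" using gr_trans[OF CA[OF XY(1)]] XY by blast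
    then show ?thesis using XY by blast
  qed
next
  fix a b assume "(a,b)\<in>\<Union>C" "(b,a)\<in>\<Union>C"
  then obtain X Y where XY: "X\<in>C" "Y\<in>C" "(a,b)\<in>X" "(b,a)\<in>Y" by blast
  show "a = b"
  proof (cases "X \<subseteq> Y")
    case True
    then show ?thesis using gr_antisym[OF CA[OF XY(2)]] XY by blast
  next
    case False
    then have "Y \<subseteq> X" using ch XY by blast
    then show ?thesis using gr_antisym[OF CA[OF XY(1)]] XY by blast
  qed
next
  fix a b c assume "(a,b)\<in>\<Union>C"
  then obtain X where "X\<in>C" "(a,b)\<in>X" by blast
  then show "(a+c,b+c)\<in>\<Union>C" using gr_compat[OF CA] by blast
next
  fix a b c assume "(a+c,b+c)\<in>\<Union>C"
  then obtain X where "X\<in>C" "(a+c,b+c)\<in>X" by blast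
  then show "(a,b)\<in>\<Union>C" using gr_cancel[OF CA] by blast
next
  fix n a b assume "n>0" "(nsmul n a, nsmul n b)\<in>\<Union>C"
  then obtain X where "X\<in>C" "(nsmul n a, nsmul n b)\<in>X" by blast
  then show "(a,b)\<in>\<Union>C" using gr_tor[OF CA] \<open>n>0\<close> by blast
qed

lemma exists_total_goodrel:
  assumes tf: "\<forall>(n::nat) (a::'g::cancel_comm_monoid_add) b. n > 0 \<longrightarrow> nsmul n a = nsmul n b \<longrightarrow> a = b"
  shows "\<exists>r::('g\<times>'g) set. goodrel r \<and> (\<forall>a b. (a,b)\<in>r \<or> (b,a)\<in>r)"
proof -
  let ?A = "{r::('g\<times>'g) set. goodrel r}"
  have "\<exists>U\<in>?A. \<forall>X\<in>C. X \<subseteq> U" if C: "C \<in> chains ?A" for C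
  proof (cases "C = {}")
    case True then show ?thesis using goodrel_Id[OF tf] by auto
  next
    case False
    have CA: "\<And>X. X \<in> C \<Longrightarrow> goodrel X" using C unfolding chains_def by auto
    have ch: "\<And>X Y. X \<in> C \<Longrightarrow> Y \<in> C \<Longrightarrow> X \<subseteq> Y \<or> Y \<subseteq> X" using chainsD[OF C] by blast
    have "goodrel (\<Union>C)" by (rule goodrel_Union[OF CA ch False])
    then show ?thesis by blast
  qed
  then obtain M where M: "M \<in> ?A" "\<forall>X\<in>?A. M \<subseteq> X \<longrightarrow> X = M"
    using Zorn_Lemma2[of ?A] by blast
  have "(a,b)\<in>M \<or> (b,a)\<in>M" for a b
  proof (rule ccontr)
    assume nab: "\<not> ((a,b)\<in>M \<or> (b,a)\<in>M)"
    have gM: "goodrel M" using M(1) by simp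
    have e: "goodrel (extrel M a b)" "M \<subseteq> extrel M a b" "(a,b) \<in> extrel M a b"
      using extrel_good[OF gM] nab by auto
    then have "extrel M a b = M" using M(2) by blast
    with e(3) nab show False by simp
  qed
  then show ?thesis using M(1) by blast
qed

definition subr :: "'k::field set \<Rightarrow> bool" where
  "subr R \<longleftrightarrow> 0\<in>R \<and> 1\<in>R \<and> (\<forall>x\<in>R. \<forall>y\<in>R. x+y\<in>R) \<and> (\<forall>x\<in>R. \<forall>y\<in>R. x*y\<in>R) \<and> (\<forall>x\<in>R. -x\<in>R)"

definition idl :: "'k::field set \<Rightarrow> 'k set \<Rightarrow> bool" where
  "idl R I \<longleftrightarrow> I \<subseteq> R \<and> 0 \<in> I \<and> (\<forall>x\<in>I. \<forall>y\<in>I. x+y\<in>I) \<and> (\<forall>r\<in>R. \<forall>x\<in>I. r*x\<in>I)"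

lemma subrD: assumes "subr R" shows "0\<in>R" "1\<in>R" "x\<in>R \<Longrightarrow> y\<in>R \<Longrightarrow> x+y\<in>R"
  "x\<in>R \<Longrightarrow> y\<in>R \<Longrightarrow> x*y\<in>R" "x\<in>R \<Longrightarrow> -x\<in>R"
  using assms unfolding subr_def by auto

lemma subr_sum: "subr R \<Longrightarrow> (\<And>x. x\<in>A \<Longrightarrow> f x \<in> R) \<Longrightarrow> sum f A \<in> R"
  by (induct A rule: infinite_finite_induct) (auto intro: subrD)

lemma subr_power: "subr R \<Longrightarrow> x \<in> R \<Longrightarrow> x^n \<in> R"
  by (induct n) (auto intro: subrD)

lemma idlD: assumes "idl R I" shows "I \<subseteq> R" "0\<in>I" "x\<in>I \<Longrightarrow> y\<in>I \<Longrightarrow> x+y\<in>I"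
  "r\<in>R \<Longrightarrow> x\<in>I \<Longrightarrow> r*x\<in>I"
  using assms unfolding idl_def by auto

lemma idl_mult_right: "idl R I \<Longrightarrow> r\<in>R \<Longrightarrow> x\<in>I \<Longrightarrow> x*r\<in>I"
  using idlD(4) by (metis mult.commute)

lemma idl_sum: "idl R I \<Longrightarrow> (\<And>x. x\<in>A \<Longrightarrow> f x \<in> I) \<Longrightarrow> sum f A \<in> I"
  by (induct A rule: infinite_finite_induct) (auto intro: idlD)

definition supp :: "('m \<Rightarrow> 'k::field) \<Rightarrow> 'm set" where "supp F = {p. F p \<noteq> 0}"

definition conv :: "('m::comm_monoid_add \<Rightarrow> 'k::field) \<Rightarrow> ('m \<Rightarrow> 'k) \<Rightarrow> 'm \<Rightarrow> 'k" where
  "conv F H m = (\<Sum>x\<in>{x\<in>supp F \<times> supp H. fst x + snd x = m}. F (fst x) * H (snd x))"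

lemma conv_sup:
  assumes "finite S" "finite T" "supp F \<subseteq> S" "supp H \<subseteq> T"
  shows "conv F H m = (\<Sum>x\<in>{x\<in>S \<times> T. fst x + snd x = m}. F (fst x) * H (snd x))"
  unfolding conv_def
proof (rule sum.mono_neutral_left)
  show "finite {x \<in> S \<times> T. fst x + snd x = m}" using assms by simp
  show "{x \<in> supp F \<times> supp H. fst x + snd x = m} \<subseteq> {x \<in> S \<times> T. fst x + snd x = m}"
    using assms by auto
  show "\<forall>i\<in>{x \<in> S \<times> T. fst x + snd x = m} - {x \<in> supp F \<times> supp H. fst x + snd x = m}.
          F (fst i) * H (snd i) = 0" by (auto simp: supp_def)
qed

lemma supp_lin: "supp (\<lambda>q. c * H q + d * E q) \<subseteq> supp H \<union> supp E"
  by (auto simp: supp_def)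

lemma conv_lin2:
  assumes "finite (supp F)" "finite (supp H)" "finite (supp E)"
  shows "conv F (\<lambda>q. c * H q + d * E q) m = c * conv F H m + d * conv F E m"
proof -
  let ?T = "supp H \<union> supp E"
  let ?A = "{x\<in>supp F \<times> ?T. fst x + snd x = m}"
  have "conv F (\<lambda>q. c * H q + d * E q) m = (\<Sum>x\<in>?A. F (fst x) * (c * H (snd x) + d * E (snd x)))"
    by (rule conv_sup) (use assms supp_lin[of c H d E] in auto)
  also have "\<dots> = c * (\<Sum>x\<in>?A. F (fst x) * H (snd x)) + d * (\<Sum>x\<in>?A. F (fst x) * E (snd x))"
    by (simp add: sum_distrib_left sum.distrib algebra_simps)
  also have "(\<Sum>x\<in>?A. F (fst x) * H (snd x)) = conv F H m"
    by (rule conv_sup[symmetric]) (use assms in auto)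
  also have "(\<Sum>x\<in>?A. F (fst x) * E (snd x)) = conv F E m"
    by (rule conv_sup[symmetric]) (use assms in auto)
  finally show ?thesis .
qed

lemma conv_lin1:
  assumes "finite (supp F)" "finite (supp H)" "finite (supp E)"
  shows "conv (\<lambda>q. c * F q + d * E q) H m = c * conv F H m + d * conv E H m"
proof -
  let ?S = "supp F \<union> supp E"
  let ?A = "{x\<in>?S \<times> supp H. fst x + snd x = m}"
  have "conv (\<lambda>q. c * F q + d * E q) H m = (\<Sum>x\<in>?A. (c * F (fst x) + d * E (fst x)) * H (snd x))"
    by (rule conv_sup) (use assms supp_lin[of c F d E] in auto)
  also have "\<dots> = c * (\<Sum>x\<in>?A. F (fst x) * H (snd x)) + d * (\<Sum>x\<in>?A. E (fst x) * H (snd x))"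
    by (simp add: sum_distrib_left sum.distrib algebra_simps)
  also have "(\<Sum>x\<in>?A. F (fst x) * H (snd x)) = conv F H m"
    by (rule conv_sup[symmetric]) (use assms in auto)
  also have "(\<Sum>x\<in>?A. E (fst x) * H (snd x)) = conv E H m"
    by (rule conv_sup[symmetric]) (use assms in auto)
  finally show ?thesis .
qed

lemma conv_in_idl:
  assumes "idl R I" "\<And>p. F p \<in> R" "\<And>q. H q \<in> I"
  shows "conv F H m \<in> I"
  unfolding conv_def by (rule idl_sum[OF assms(1)]) (intro idlD(4)[OF assms(1)] assms)

lemma exists_top:
  assumes g: "goodrel r" and tot: "\<forall>a b. (a,b)\<in>r \<or> (b,a)\<in>r"
  shows "finite S \<Longrightarrow> S \<noteq> {} \<Longrightarrow> \<exists>t\<in>S. \<forall>x\<in>S. (x,t)\<in>r"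
proof (induction S rule: finite_ne_induct)
  case (singleton x) then show ?case using gr_refl[OF g] by auto
next
  case (insert x S)
  then obtain t where t: "t\<in>S" "\<forall>y\<in>S. (y,t)\<in>r" by blast
  show ?case
  proof (cases "(x,t)\<in>r")
    case True then show ?thesis using t by auto
  next
    case False
    then have "(t,x)\<in>r" using tot by blast
    then have "\<forall>y\<in>insert x S. (y,x)\<in>r" using t gr_trans[OF g] gr_refl[OF g] by blast
    then show ?thesis by blast
  qed
qed

lemma conv_top:
  fixes F H :: "'m::cancel_comm_monoid_add \<Rightarrow> 'k::field"
  assumes g: "goodrel r" and fin: "finite (supp F)" "finite (supp H)"
    and tF: "tF \<in> supp F" "\<forall>p\<in>supp F. (p,tF)\<in>r" and tH: "tH \<in> supp H" "\<forall>q\<in>supp H. (q,tH)\<in>r"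
  shows "conv F H (tF+tH) = F tF * H tH"
proof -
  have "{x\<in>supp F \<times> supp H. fst x + snd x = tF+tH} = {(tF,tH)}"
  proof (intro equalityI subsetI)
    fix x assume x: "x \<in> {x\<in>supp F \<times> supp H. fst x + snd x = tF+tH}"
    obtain p q where pq: "x = (p,q)" by (cases x)
    have p: "p \<in> supp F" "q \<in> supp H" "p + q = tF + tH" using x pq by auto
    have 1: "(p+q, p+tH) \<in> r" using gr_compat[OF g, of q tH p] tH p by (simp add: add.commute)
    have 2: "(p+tH, tF+tH) \<in> r" using gr_compat[OF g, of p tF tH] tF p by simp
    have "(p+tH, p+q) \<in> r" using 2 p(3) by simp
    then have "p+q = p+tH" using gr_antisym[OF g 1] by simp
    then have qq: "q = tH" by simp
    then have "p = tF" using p(3) by simp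
    then show "x \<in> {(tF,tH)}" using pq qq by simp
  next
    fix x assume "x \<in> {(tF,tH)}" then show "x \<in> {x\<in>supp F \<times> supp H. fst x + snd x = tF+tH}"
      using tF tH by auto
  qed
  then show ?thesis unfolding conv_def by simp
qed

lemma supp_empty_zero: "supp H = {} \<Longrightarrow> H q = 0"
  by (auto simp: supp_def)

lemma gauss_inner:
  fixes F :: "'m::cancel_comm_monoid_add \<Rightarrow> 'k::field" and r :: "('m \<times> 'm) set"
  assumes g: "goodrel r" and tot: "\<forall>a b. (a,b)\<in>r \<or> (b,a)\<in>r"
    and R: "subr R" and I: "idl R I" and Ffin: "finite (supp F)" and FR: "\<And>p. F p \<in> R"
    and tF: "tF \<in> supp F" "\<forall>p\<in>supp F. (p,tF)\<in>r"
  shows "finite (supp H) \<Longrightarrow> card (supp H) \<le> n \<Longrightarrow> \<forall>q. H q \<in> R \<Longrightarrow> \<forall>m. conv F H m \<in> I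
    \<Longrightarrow> F tF ^ n * H q \<in> I"
proof (induction n arbitrary: H q)
  case 0
  then have "supp H = {}" by simp
  then show ?case using idlD(2)[OF I] by (simp add: supp_empty_zero)
next
  case (Suc n)
  show ?case
  proof (cases "supp H = {}")
    case True then show ?thesis using idlD(2)[OF I] by (simp add: supp_empty_zero)
  next
    case False
    obtain tH where tH: "tH \<in> supp H" "\<forall>q\<in>supp H. (q,tH)\<in>r"
      using exists_top[OF g tot Suc.prems(1) False] by blast
    define a where "a = F tF"
    have aR: "a \<in> R" using FR a_def by simp
    have aH: "a * H tH \<in> I"
      using conv_top[OF g Ffin Suc.prems(1) tF tH] Suc.prems(4) a_def by metis
    define E where "E = (\<lambda>q. if q = tH then a * H tH else 0)"
    define H2 where "H2 = (\<lambda>q. a * H q + (-1) * E q)"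
    have Efin: "finite (supp E)"
      by (rule finite_subset[of _ "{tH}"]) (auto simp: supp_def E_def)
    have EI: "\<And>q. E q \<in> I" using aH idlD(2)[OF I] by (simp add: E_def)
    have m1: "-1 \<in> R" using subrD(2,5)[OF R] by blast
    have conv2: "conv F H2 m \<in> I" for m
    proof -
      have eq: "conv F H2 m = a * conv F H m + (-1) * conv F E m"
        unfolding H2_def by (rule conv_lin2[OF Ffin Suc.prems(1) Efin])
      have c1: "a * conv F H m \<in> I" by (rule idlD(4)[OF I aR Suc.prems(4)[rule_format]])
      have c2: "(-1) * conv F E m \<in> I" by (rule idlD(4)[OF I m1 conv_in_idl[OF I FR EI]])
      show ?thesis unfolding eq by (rule idlD(3)[OF I c1 c2])
    qed
    have H2t: "H2 tH = 0" by (simp add: H2_def E_def)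
    have H2o: "q \<noteq> tH \<Longrightarrow> H2 q = a * H q" for q by (simp add: H2_def E_def)
    have supp2: "supp H2 \<subseteq> supp H - {tH}"
    proof
      fix x assume "x \<in> supp H2"
      then have x: "H2 x \<noteq> 0" by (simp add: supp_def)
      then have "x \<noteq> tH" using H2t by auto
      moreover then have "H x \<noteq> 0" using H2o x by auto
      ultimately show "x \<in> supp H - {tH}" by (simp add: supp_def)
    qed
    have fin2: "finite (supp H2)" by (rule finite_subset[OF supp2]) (use Suc.prems(1) in simp)
    have "card (supp H2) \<le> card (supp H - {tH})"
      using supp2 Suc.prems(1) by (intro card_mono) auto
    also have "\<dots> = card (supp H) - 1" using tH(1) Suc.prems(1) by simp
    finally have card2: "card (supp H2) \<le> n" using Suc.prems(2) by simp
    have H2R: "\<forall>q. H2 q \<in> R"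
    proof
      fix q show "H2 q \<in> R"
      proof (cases "q = tH")
        case True then show ?thesis using H2t subrD(1)[OF R] by simp
      next
        case False then show ?thesis using H2o[OF False] subrD(4)[OF R aR] Suc.prems(3) by simp
      qed
    qed
    have call: "\<forall>m. conv F H2 m \<in> I" using conv2 by blast
    have IH: "a ^ n * H2 q' \<in> I" for q'
      using Suc.IH[OF fin2 card2 H2R call] unfolding a_def .
    show ?thesis
    proof (cases "q = tH")
      case True
      have c: "a ^ n * (a * H tH) \<in> I" using idlD(4)[OF I subr_power[OF R aR] aH] .
      have eq: "F tF ^ Suc n * H q = a ^ n * (a * H tH)"
        using True unfolding a_def by (simp add: mult_ac)
      show ?thesis unfolding eq by (rule c)
    next
      case False
      have c: "a ^ n * (a * H q) \<in> I" using IH[of q] H2o[OF False] by simp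
      have eq: "F tF ^ Suc n * H q = a ^ n * (a * H q)"
        unfolding a_def by (simp add: mult_ac)
      show ?thesis unfolding eq by (rule c)
    qed
  qed
qed

lemma idl_pow_sum:
  assumes R: "subr R" and I: "idl R I" and u: "u \<in> I" and w: "w \<in> R" and a: "a \<in> R"
    and aw: "a ^ s * w \<in> I" and s: "s \<ge> 1"
  shows "(u + a * w) ^ s \<in> I"
proof -
  have uR: "u \<in> R" using idlD(1)[OF I] u by blast
  have xR: "u + a * w \<in> R" using subrD[OF R] uR a w by blast
  have ywR: "a * w \<in> R" using subrD[OF R] a w by blast
  have "(a*w)^s = (a^s * w) * w^(s-1)"
    using s by (cases s) (simp_all add: power_mult_distrib algebra_simps)
  then have 1: "(a*w)^s \<in> I" using idl_mult_right[OF I subr_power[OF R w] aw] by simp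
  let ?S = "\<Sum>i<s. (a*w)^(s - Suc i) * (u + a*w)^i"
  have SR: "?S \<in> R"
    by (rule subr_sum[OF R]) (intro subrD(4)[OF R] subr_power[OF R] xR ywR)
  have "(u + a*w)^s - (a*w)^s = ((u + a*w) - a*w) * ?S" by (rule power_diff_sumr2)
  then have "(u + a*w)^s = (a*w)^s + u * ?S" by (simp add: algebra_simps)
  moreover have "u * ?S \<in> I" using idl_mult_right[OF I SR u] .
  ultimately show ?thesis using idlD(3)[OF I 1] by simp
qed

lemma gauss_outer:
  fixes F H :: "'m::cancel_comm_monoid_add \<Rightarrow> 'k::field" and r :: "('m \<times> 'm) set"
  assumes g: "goodrel r" and tot: "\<forall>a b. (a,b)\<in>r \<or> (b,a)\<in>r"
    and R: "subr R"
  shows "idl R I \<Longrightarrow> finite (supp F) \<Longrightarrow> card (supp F) \<le> n \<Longrightarrow> \<forall>p. F p \<in> R \<Longrightarrow>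
    finite (supp H) \<Longrightarrow> \<forall>q. H q \<in> R \<Longrightarrow> \<forall>m. conv F H m \<in> I \<Longrightarrow> \<exists>N. (F p * H q) ^ N \<in> I"
proof (induction n arbitrary: F I p)
  case 0
  then have "supp F = {}" by simp
  then have "(F p * H q) ^ 1 \<in> I" using idlD(2)[OF "0.prems"(1)] by (simp add: supp_empty_zero)
  then show ?case by blast
next
  case (Suc n)
  note I = Suc.prems(1)
  show ?case
  proof (cases "supp F = {} \<or> H q = 0")
    case True
    then have "(F p * H q) ^ 1 \<in> I" using idlD(2)[OF I] by (auto simp: supp_empty_zero)
    then show ?thesis by blast
  next
    case False
    then have Fne: "supp F \<noteq> {}" and Hq: "H q \<noteq> 0" by auto
    obtain tF where tF: "tF \<in> supp F" "\<forall>p\<in>supp F. (p,tF)\<in>r"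
      using exists_top[OF g tot Suc.prems(2) Fne] by blast
    define a where "a = F tF"
    have aR: "a \<in> R" using Suc.prems(4) a_def by simp
    define s where "s = card (supp H)"
    have "q \<in> supp H" using Hq by (simp add: supp_def)
    then have "supp H \<noteq> {}" by blast
    then have "card (supp H) > 0" using Suc.prems(5) by (simp add: card_gt_0_iff)
    then have s1: "s \<ge> 1" unfolding s_def by simp
    have FR: "\<And>p. F p \<in> R" using Suc.prems(4) by blast
    have inner: "a ^ s * H q' \<in> I" for q'
      unfolding a_def by (rule gauss_inner[OF g tot R I Suc.prems(2) FR tF Suc.prems(5) _ Suc.prems(6) Suc.prems(7)]) (simp add: s_def)
    define I' where "I' = {x. \<exists>u\<in>I. \<exists>w\<in>R. a ^ s * w \<in> I \<and> x = u + a * w}"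
    have II': "I \<subseteq> I'"
    proof
      fix x assume "x \<in> I"
      moreover have "a ^ s * 0 \<in> I" using idlD(2)[OF I] by simp
      moreover have "x = x + a * 0" by simp
      ultimately show "x \<in> I'" unfolding I'_def using subrD(1)[OF R] by blast
    qed
    have I': "idl R I'"
      unfolding idl_def
    proof (intro conjI ballI)
      show "I' \<subseteq> R"
      proof
        fix x assume "x \<in> I'"
        then obtain u w where uw: "u \<in> I" "w \<in> R" "x = u + a * w" unfolding I'_def by blast
        have uR: "u \<in> R" using idlD(1)[OF I] uw(1) by blast
        show "x \<in> R" unfolding uw(3) by (rule subrD(3)[OF R uR subrD(4)[OF R aR uw(2)]])
      qed
      show "0 \<in> I'" using II' idlD(2)[OF I] by blast
    next
      fix x y assume "x \<in> I'" "y \<in> I'"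
      then obtain u w u' w' where uw: "u \<in> I" "w \<in> R" "a ^ s * w \<in> I" "x = u + a * w"
        "u' \<in> I" "w' \<in> R" "a ^ s * w' \<in> I" "y = u' + a * w'" unfolding I'_def by blast
      have "x + y = (u + u') + a * (w + w')" using uw by (simp add: algebra_simps)
      moreover have "a ^ s * (w + w') \<in> I" using idlD(3)[OF I uw(3) uw(7)] by (simp add: algebra_simps)
      moreover have "u + u' \<in> I" using idlD(3)[OF I uw(1) uw(5)] .
      moreover have "w + w' \<in> R" using subrD(3)[OF R uw(2) uw(6)] .
      ultimately show "x + y \<in> I'" unfolding I'_def by blast
    next
      fix c x assume c: "c \<in> R" and "x \<in> I'"
      then obtain u w where uw: "u \<in> I" "w \<in> R" "a ^ s * w \<in> I" "x = u + a * w" unfolding I'_def by blast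
      have "c * x = c * u + a * (c * w)" using uw by (simp add: algebra_simps)
      moreover have "a ^ s * (c * w) \<in> I" using idlD(4)[OF I c uw(3)] by (simp add: algebra_simps)
      moreover have "c * u \<in> I" using idlD(4)[OF I c uw(1)] .
      moreover have "c * w \<in> R" using subrD(4)[OF R c uw(2)] .
      ultimately show "c * x \<in> I'" unfolding I'_def by blast
    qed
    define EF where "EF = (\<lambda>p. if p = tF then a else 0)"
    define F' where "F' = (\<lambda>p. 1 * F p + (-1) * EF p)"
    have F'o: "p' \<noteq> tF \<Longrightarrow> F' p' = F p'" for p' by (simp add: F'_def EF_def)
    have F't: "F' tF = 0" by (simp add: F'_def EF_def a_def)
    have EFfin: "finite (supp EF)"
      by (rule finite_subset[of _ "{tF}"]) (auto simp: supp_def EF_def)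
    have suppF': "supp F' \<subseteq> supp F - {tF}"
    proof
      fix x assume "x \<in> supp F'"
      then have x: "F' x \<noteq> 0" by (simp add: supp_def)
      then have "x \<noteq> tF" using F't by auto
      moreover then have "F x \<noteq> 0" using F'o x by auto
      ultimately show "x \<in> supp F - {tF}" by (simp add: supp_def)
    qed
    have finF': "finite (supp F')" by (rule finite_subset[OF suppF']) (use Suc.prems(2) in simp)
    have "card (supp F') \<le> card (supp F - {tF})"
      using suppF' Suc.prems(2) by (intro card_mono) auto
    also have "\<dots> = card (supp F) - 1" using tF(1) Suc.prems(2) by simp
    finally have cardF': "card (supp F') \<le> n" using Suc.prems(3) by simp
    have F'R: "\<forall>p. F' p \<in> R"
    proof
      fix p' show "F' p' \<in> R"
        by (cases "p' = tF") (use F'o F't subrD[OF R] Suc.prems(4) in auto)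
    qed
    have convF': "conv F' H m \<in> I'" for m
    proof -
      let ?A = "{x\<in>{tF} \<times> supp H. fst x + snd x = m}"
      define w where "w = (\<Sum>x\<in>?A. H (snd x))"
      have "conv EF H m = (\<Sum>x\<in>?A. EF (fst x) * H (snd x))"
        by (rule conv_sup) (use Suc.prems(5) in \<open>auto simp: supp_def EF_def\<close>)
      also have "\<dots> = (\<Sum>x\<in>?A. a * H (snd x))"
        by (rule sum.cong) (auto simp: EF_def)
      also have "\<dots> = a * w" unfolding w_def by (simp add: sum_distrib_left)
      finally have ce: "conv EF H m = a * w" .
      have wR: "w \<in> R" unfolding w_def using Suc.prems(6) by (intro subr_sum[OF R]) blast
      have aw: "a ^ s * w \<in> I" unfolding w_def sum_distrib_left
        by (rule idl_sum[OF I]) (rule inner)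
      have "conv F' H m = 1 * conv F H m + (-1) * conv EF H m"
        unfolding F'_def by (rule conv_lin1[OF Suc.prems(2) Suc.prems(5) EFfin])
      then have "conv F' H m = conv F H m + a * (- w)" using ce by simp
      moreover have "a ^ s * (- w) \<in> I"
        using idlD(4)[OF I subrD(5)[OF R subrD(2)[OF R]] aw] by simp
      moreover have "- w \<in> R" using subrD(5)[OF R wR] .
      moreover have "conv F H m \<in> I" using Suc.prems(7) by blast
      ultimately show ?thesis unfolding I'_def by blast
    qed
    show ?thesis
    proof (cases "p = tF")
      case True
      have "(a * H q) ^ s = (a ^ s * H q) * H q ^ (s - 1)"
        using s1 by (cases s) (simp_all add: power_mult_distrib algebra_simps)
      moreover have "(a ^ s * H q) * H q ^ (s - 1) \<in> I"
        by (rule idl_mult_right[OF I subr_power[OF R] inner[of q]]) (use Suc.prems(6) in blast)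
      ultimately have "(a * H q) ^ s \<in> I" by simp
      then show ?thesis unfolding a_def True by blast
    next
      case False
      have cF': "\<forall>m. conv F' H m \<in> I'" using convF' by blast
      obtain N where N: "(F' p * H q) ^ N \<in> I'"
        using Suc.IH[OF I' finF' cardF' F'R Suc.prems(5) Suc.prems(6) cF'] by blast
      then obtain u w where uw: "u \<in> I" "w \<in> R" "a ^ s * w \<in> I" "(F p * H q) ^ N = u + a * w"
        unfolding I'_def using F'o[OF False] by auto
      have "(u + a * w) ^ s \<in> I" by (rule idl_pow_sum[OF R I uw(1) uw(2) aR uw(3) s1])
      then have "(F p * H q) ^ (N * s) \<in> I" using uw(4) by (simp add: power_mult)
      then show ?thesis by blast
    qed
  qed
qed

definition rmod :: "'k::field set \<Rightarrow> 'k set \<Rightarrow> bool" where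
  "rmod R E \<longleftrightarrow> 0 \<in> E \<and> (\<forall>x\<in>E. \<forall>y\<in>E. x + y \<in> E) \<and> (\<forall>r\<in>R. \<forall>x\<in>E. r * x \<in> E)"

lemma rmodD: assumes "rmod R E" shows "0 \<in> E" "x\<in>E \<Longrightarrow> y\<in>E \<Longrightarrow> x+y\<in>E" "r\<in>R \<Longrightarrow> x\<in>E \<Longrightarrow> r*x\<in>E"
  using assms unfolding rmod_def by auto

lemma nz_rmod: "nz_submod R E \<Longrightarrow> rmod R E"
  unfolding nz_submod_def rmod_def by blast

lemma rmod_sum: "rmod R E \<Longrightarrow> (\<And>x. x\<in>A \<Longrightarrow> f x \<in> E) \<Longrightarrow> sum f A \<in> E"
  by (induct A rule: infinite_finite_induct) (auto intro: rmodD)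

lemma idl_rmod: "idl R I \<Longrightarrow> rmod R I"
  unfolding idl_def rmod_def by blast

lemma subr_rmod: "subr R \<Longrightarrow> rmod R R"
  unfolding subr_def rmod_def by blast

lemma genI: "finite F \<Longrightarrow> F \<subseteq> S \<Longrightarrow> (\<forall>s\<in>F. c s \<in> R) \<Longrightarrow> x = (\<Sum>s\<in>F. c s * s) \<Longrightarrow> x \<in> gen_ideal R S"
  unfolding gen_ideal_def by (rule CollectI, intro exI conjI, assumption+)

lemma genE: assumes "x \<in> gen_ideal R S"
  obtains F c where "finite F" "F \<subseteq> S" "\<forall>s\<in>F. c s \<in> R" "x = (\<Sum>s\<in>F. c s * s)"
  using assms unfolding gen_ideal_def by blast

lemma gen_rmod:
  assumes R: "subr R" shows "rmod R (gen_ideal R S)"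
  unfolding rmod_def
proof (intro conjI ballI)
  show "0 \<in> gen_ideal R S" unfolding gen_ideal_def by (rule CollectI, rule exI[of _ "{}"]) simp
next
  fix x y assume xy: "x \<in> gen_ideal R S" "y \<in> gen_ideal R S"
  obtain F1 c1 where A1: "finite F1" "F1 \<subseteq> S" "\<forall>s\<in>F1. c1 s \<in> R" "x = (\<Sum>s\<in>F1. c1 s * s)"
    using xy(1) by (rule genE) blast
  obtain F2 c2 where A2: "finite F2" "F2 \<subseteq> S" "\<forall>s\<in>F2. c2 s \<in> R" "y = (\<Sum>s\<in>F2. c2 s * s)"
    using xy(2) by (rule genE) blast
  note A = A1 A2
  define c where "c = (\<lambda>s. (if s \<in> F1 then c1 s else 0) + (if s \<in> F2 then c2 s else 0))"
  have fin: "finite (F1 \<union> F2)" using A by simp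
  have "(\<Sum>s\<in>F1 \<union> F2. c s * s) = (\<Sum>s\<in>F1 \<union> F2. (if s \<in> F1 then c1 s * s else 0))
      + (\<Sum>s\<in>F1 \<union> F2. (if s \<in> F2 then c2 s * s else 0))"
    unfolding sum.distrib[symmetric] by (rule sum.cong) (simp_all add: c_def distrib_right)
  also have "\<dots> = x + y"
  proof -
    have "(\<Sum>s\<in>F1 \<union> F2. (if s \<in> F1 then c1 s * s else 0)) = (\<Sum>s\<in>(F1 \<union> F2) \<inter> F1. c1 s * s)"
      by (rule sum.inter_restrict[OF fin, symmetric])
    also have "(F1 \<union> F2) \<inter> F1 = F1" by blast
    finally have 1: "(\<Sum>s\<in>F1 \<union> F2. (if s \<in> F1 then c1 s * s else 0)) = x" using A(4) by simp
    have "(\<Sum>s\<in>F1 \<union> F2. (if s \<in> F2 then c2 s * s else 0)) = (\<Sum>s\<in>(F1 \<union> F2) \<inter> F2. c2 s * s)"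
      by (rule sum.inter_restrict[OF fin, symmetric])
    also have "(F1 \<union> F2) \<inter> F2 = F2" by blast
    finally have 2: "(\<Sum>s\<in>F1 \<union> F2. (if s \<in> F2 then c2 s * s else 0)) = y" using A(8) by simp
    show ?thesis using 1 2 by simp
  qed
  finally have eq: "x + y = (\<Sum>s\<in>F1 \<union> F2. c s * s)" by simp
  have cR: "\<forall>s\<in>F1 \<union> F2. c s \<in> R"
  proof
    fix s assume "s \<in> F1 \<union> F2"
    have "(if s \<in> F1 then c1 s else 0) \<in> R" using A(3) subrD(1)[OF R] by simp
    moreover have "(if s \<in> F2 then c2 s else 0) \<in> R" using A(7) subrD(1)[OF R] by simp
    ultimately show "c s \<in> R" unfolding c_def by (rule subrD(3)[OF R])
  qed
  have "F1 \<union> F2 \<subseteq> S" using A(2) A(6) by blast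
  then show "x + y \<in> gen_ideal R S" by (rule genI[OF fin _ cR eq])
next
  fix r x assume r: "r \<in> R" and xg: "x \<in> gen_ideal R S"
  obtain F c where A: "finite F" "F \<subseteq> S" "\<forall>s\<in>F. c s \<in> R" "x = (\<Sum>s\<in>F. c s * s)"
    using xg by (rule genE) blast
  have eq: "r * x = (\<Sum>s\<in>F. (r * c s) * s)" using A(4) by (simp add: sum_distrib_left mult.assoc)
  have cR: "\<forall>s\<in>F. r * c s \<in> R" using A(3) subrD(4)[OF R r] by blast
  show "r * x \<in> gen_ideal R S" by (rule genI[OF A(1,2) cR eq])
qed

lemma gen_sub:
  assumes E: "rmod R E" and SE: "S \<subseteq> E" shows "gen_ideal R S \<subseteq> E"
proof
  fix x assume "x \<in> gen_ideal R S"
  then obtain F c where A: "finite F" "F \<subseteq> S" "\<forall>s\<in>F. c s \<in> R" "x = (\<Sum>s\<in>F. c s * s)"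
    by (rule genE) blast
  have "(\<Sum>s\<in>F. c s * s) \<in> E"
  proof (rule rmod_sum[OF E])
    fix s assume "s \<in> F" then show "c s * s \<in> E" using A SE rmodD(3)[OF E] by blast
  qed
  then show "x \<in> E" using A(4) by simp
qed

lemma gen_incl:
  assumes R: "subr R" and s: "s \<in> S" shows "s \<in> gen_ideal R S"
proof -
  have "finite {s}" "{s} \<subseteq> S" "\<forall>t\<in>{s}. (\<lambda>_. 1) t \<in> R" "s = (\<Sum>t\<in>{s}. (\<lambda>_. 1) t * t)"
    using s subrD(2)[OF R] by auto
  then show ?thesis by (rule genI)
qed

lemma gen_R: "subr R \<Longrightarrow> S \<subseteq> R \<Longrightarrow> gen_ideal R S \<subseteq> R"
  by (rule gen_sub[OF subr_rmod])

lemma gen_mono: "S \<subseteq> T \<Longrightarrow> gen_ideal R S \<subseteq> gen_ideal R T"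
  unfolding gen_ideal_def by blast

lemma gen_idl: "subr R \<Longrightarrow> S \<subseteq> R \<Longrightarrow> idl R (gen_ideal R S)"
  using gen_R[of R S] gen_rmod[of R S] unfolding idl_def rmod_def by blast

lemma nz_gen:
  assumes R: "subr R" and s: "s \<in> S" "s \<noteq> 0" shows "nz_submod R (gen_ideal R S)"
  using gen_rmod[OF R, of S] gen_incl[OF R s(1)] s(2) unfolding nz_submod_def rmod_def by blast

lemma nz_gen_ex:
  assumes "nz_submod R (gen_ideal R S)" shows "\<exists>s\<in>S. s \<noteq> 0"
proof (rule ccontr)
  assume "\<not> ?thesis"
  then have "S \<subseteq> {0}" by blast
  have "gen_ideal R S \<subseteq> {0}"
  proof
    fix x assume "x \<in> gen_ideal R S"
    then obtain F c where A: "F \<subseteq> S" "x = (\<Sum>s\<in>F. c s * s)" by (rule genE) blast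
    have "(\<Sum>s\<in>F. c s * s) = 0"
      by (rule sum.neutral) (use A(1) \<open>S \<subseteq> {0}\<close> in auto)
    then show "x \<in> {0}" using A(2) by simp
  qed
  with assms show False unfolding nz_submod_def by blast
qed

lemma nzR: "subr R \<Longrightarrow> nz_submod R R"
  unfolding nz_submod_def subr_def by (metis one_neq_zero singletonD)

context
  fixes R :: "'k::field set" and st
  assumes R: "subr R" and ss: "semistar R st"
begin

lemma st_nz: "nz_submod R E \<Longrightarrow> nz_submod R (st E)" using ss unfolding semistar_def by metis
lemma st_scale: "x \<noteq> 0 \<Longrightarrow> nz_submod R E \<Longrightarrow> st ((*) x ` E) = (*) x ` st E" using ss unfolding semistar_def by metis
lemma st_mono: "nz_submod R E \<Longrightarrow> nz_submod R F \<Longrightarrow> E \<subseteq> F \<Longrightarrow> st E \<subseteq> st F" using ss unfolding semistar_def by metis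
lemma st_ext: "nz_submod R E \<Longrightarrow> E \<subseteq> st E" using ss unfolding semistar_def by metis
lemma st_idem: "nz_submod R E \<Longrightarrow> st (st E) = st E" using ss unfolding semistar_def by metis

lemma nz_scale:
  assumes x: "x \<noteq> 0" and E: "nz_submod R E" shows "nz_submod R ((*) x ` E)"
  unfolding nz_submod_def
proof (intro conjI ballI)
  show "0 \<in> (*) x ` E" using E unfolding nz_submod_def by force
next
  fix u v assume "u \<in> (*) x ` E" "v \<in> (*) x ` E"
  then obtain u' v' where "u' \<in> E" "v' \<in> E" "u = x * u'" "v = x * v'" by blast
  moreover then have "u' + v' \<in> E" using E unfolding nz_submod_def by blast
  ultimately show "u + v \<in> (*) x ` E" by (metis distrib_left imageI)
next
  fix r u assume r: "r \<in> R" and "u \<in> (*) x ` E"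
  then obtain u' where "u' \<in> E" "u = x * u'" by blast
  moreover then have "r * u' \<in> E" using E r unfolding nz_submod_def by blast
  ultimately show "r * u \<in> (*) x ` E" by (metis mult.left_commute imageI)
next
  obtain e where "e \<in> E" "e \<noteq> 0" using E unfolding nz_submod_def by blast
  then have "x * e \<in> (*) x ` E" "x * e \<noteq> 0" using x by auto
  then show "(*) x ` E \<noteq> {0}" by blast
qed

lemma key_L:
  assumes SR: "S \<subseteq> R" and TR: "T \<subseteq> R" and nS: "nz_submod R (gen_ideal R S)" and nT: "nz_submod R (gen_ideal R T)"
    and fS: "st R \<subseteq> st (gen_ideal R S)" and fT: "st R \<subseteq> st (gen_ideal R T)"
    and P: "nz_submod R P" and prod: "\<And>s t. s \<in> S \<Longrightarrow> t \<in> T \<Longrightarrow> s * t \<in> P"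
  shows "st R \<subseteq> st P"
proof -
  have nP: "nz_submod R (st P)" by (rule st_nz[OF P])
  have sP: "s \<in> st P" if s: "s \<in> S" for s
  proof (cases "s = 0")
    case True then show ?thesis using nP unfolding nz_submod_def by simp
  next
    case False
    have sub: "(*) s ` gen_ideal R T \<subseteq> P"
    proof
      fix y assume "y \<in> (*) s ` gen_ideal R T"
      then obtain x where x: "x \<in> gen_ideal R T" "y = s * x" by blast
      obtain F c where A: "finite F" "F \<subseteq> T" "\<forall>t\<in>F. c t \<in> R" "x = (\<Sum>t\<in>F. c t * t)"
        using x(1) by (rule genE) blast
      have "s * x = (\<Sum>t\<in>F. c t * (s * t))" using A(4) by (simp add: sum_distrib_left mult_ac)
      also have "\<dots> \<in> P"
      proof (rule rmod_sum[OF nz_rmod[OF P]])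
        fix t assume "t \<in> F"
        then show "c t * (s * t) \<in> P" using A(2,3) prod[OF s] rmodD(3)[OF nz_rmod[OF P]] by blast
      qed
      finally show "y \<in> P" using x(2) by simp
    qed
    have nE: "nz_submod R ((*) s ` gen_ideal R T)" by (rule nz_scale[OF False nT])
    have "st ((*) s ` gen_ideal R T) \<subseteq> st P" by (rule st_mono[OF nE P sub])
    moreover have "st ((*) s ` gen_ideal R T) = (*) s ` st (gen_ideal R T)" by (rule st_scale[OF False nT])
    moreover have "1 \<in> st (gen_ideal R T)" using fT st_ext[OF nzR[OF R]] subrD(2)[OF R] by blast
    ultimately have "s * 1 \<in> st P" by blast
    then show ?thesis by simp
  qed
  have "gen_ideal R S \<subseteq> st P" by (rule gen_sub[OF nz_rmod[OF nP]]) (use sP in blast)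
  then have "st (gen_ideal R S) \<subseteq> st (st P)" by (rule st_mono[OF nS nP])
  then show ?thesis using fS st_idem[OF P] by blast
qed

lemma square_step:
  assumes UR: "U \<subseteq> R" and xR: "x \<in> R" and n: "nz_submod R (gen_ideal R (insert x U))"
    and f: "st R \<subseteq> st (gen_ideal R (insert x U))"
  shows "nz_submod R (gen_ideal R (insert (x*x) U)) \<and> st R \<subseteq> st (gen_ideal R (insert (x*x) U))"
proof -
  obtain v where v: "v \<in> insert x U" "v \<noteq> 0" using nz_gen_ex[OF n] by blast
  have nP: "nz_submod R (gen_ideal R (insert (x*x) U))"
  proof (cases "v = x")
    case True then show ?thesis using v nz_gen[OF R, of "x*x"] by simp
  next
    case False then show ?thesis using v nz_gen[OF R, of v] by simp
  qed
  have IR: "insert x U \<subseteq> R" using UR xR by blast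
  have "st R \<subseteq> st (gen_ideal R (insert (x*x) U))"
  proof (rule key_L[OF IR IR n n f f nP])
    fix s t assume s: "s \<in> insert x U" and t: "t \<in> insert x U"
    have M: "rmod R (gen_ideal R (insert (x*x) U))" by (rule gen_rmod[OF R])
    show "s * t \<in> gen_ideal R (insert (x*x) U)"
    proof (cases "s \<in> U")
      case True
      have "t * s \<in> gen_ideal R (insert (x*x) U)"
        using rmodD(3)[OF M _ gen_incl[OF R]] True t IR by blast
      then show ?thesis by (simp add: mult.commute)
    next
      case False
      then have sx: "s = x" using s by blast
      show ?thesis
      proof (cases "t \<in> U")
        case True
        then show ?thesis using rmodD(3)[OF M _ gen_incl[OF R]] sx xR by blast
      next
        case False
        then have "t = x" using t by blast
        then show ?thesis using sx gen_incl[OF R] by blast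
      qed
    qed
  qed
  then show ?thesis using nP by blast
qed

lemma square_iter:
  assumes UR: "U \<subseteq> R" and xR: "x \<in> R" and n: "nz_submod R (gen_ideal R (insert x U))"
    and f: "st R \<subseteq> st (gen_ideal R (insert x U))"
  shows "nz_submod R (gen_ideal R (insert (x^(2^k)) U)) \<and> st R \<subseteq> st (gen_ideal R (insert (x^(2^k)) U))"
proof (induction k)
  case 0 then show ?case using n f by simp
next
  case (Suc k)
  have "x^(2^k) \<in> R" by (rule subr_power[OF R xR])
  from square_step[OF UR this] Suc.IH
  have "nz_submod R (gen_ideal R (insert (x^(2^k)*x^(2^k)) U)) \<and> st R \<subseteq> st (gen_ideal R (insert (x^(2^k)*x^(2^k)) U))"
    by blast
  moreover have "x^(2^k)*x^(2^k) = x^(2^Suc k)" by (simp add: power_add[symmetric] mult_2)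
  ultimately show ?case by simp
qed

lemma rad_full:
  assumes I: "idl R I" and nI: "nz_submod R I"
  shows "finite T \<Longrightarrow> T \<subseteq> R \<Longrightarrow> S \<subseteq> I \<Longrightarrow> (\<forall>t\<in>T. \<exists>N. t^N \<in> I) \<Longrightarrow>
    nz_submod R (gen_ideal R (S \<union> T)) \<Longrightarrow> st R \<subseteq> st (gen_ideal R (S \<union> T)) \<Longrightarrow> st R \<subseteq> st I"
proof (induction T arbitrary: S rule: finite_induct)
  case empty
  have "gen_ideal R S \<subseteq> I" by (rule gen_sub[OF idl_rmod[OF I] empty.prems(2)])
  then have "st (gen_ideal R S) \<subseteq> st I" using st_mono[OF _ nI] empty.prems(4) by simp
  then show ?case using empty.prems(5) by simp
next
  case (insert x T)
  have SR: "S \<subseteq> R" using insert.prems(2) idlD(1)[OF I] by blast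
  obtain N where N: "x^N \<in> I" using insert.prems(3) by blast
  have xR: "x \<in> R" using insert.prems(1) by blast
  have UR: "S \<union> T \<subseteq> R" using SR insert.prems(1) by blast
  have eqU: "S \<union> insert x T = insert x (S \<union> T)" by blast
  have it: "nz_submod R (gen_ideal R (insert (x^(2^N)) (S \<union> T))) \<and> st R \<subseteq> st (gen_ideal R (insert (x^(2^N)) (S \<union> T)))"
    by (rule square_iter[OF UR xR]) (use insert.prems(4,5) eqU in simp_all)
  have "N < 2^N" by (rule less_exp)
  then have "x^(2^N) = x^N * x^(2^N - N)" by (simp add: power_add[symmetric])
  also have "\<dots> \<in> I" by (rule idl_mult_right[OF I subr_power[OF R xR] N])
  finally have xI: "x^(2^N) \<in> I" .
  have eq2: "insert (x^(2^N)) S \<union> T = insert (x^(2^N)) (S \<union> T)" by blast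
  show ?case
    by (rule insert.IH[of "insert (x^(2^N)) S"]) (use insert.prems xI it eq2 in simp_all)
qed

end

context
  fixes Rg :: "'g::cancel_comm_monoid_add \<Rightarrow> 'k::field set" and R :: "'k set"
  assumes gd: "graded_domain Rg R"
begin

lemma gd0: "0 \<in> Rg a" using gd unfolding graded_domain_def by metis
lemma gd_add: "x \<in> Rg a \<Longrightarrow> y \<in> Rg a \<Longrightarrow> x + y \<in> Rg a" using gd unfolding graded_domain_def by metis
lemma gd_neg: "x \<in> Rg a \<Longrightarrow> - x \<in> Rg a" using gd unfolding graded_domain_def by metis
lemma gd_mult: "x \<in> Rg a \<Longrightarrow> y \<in> Rg b \<Longrightarrow> x * y \<in> Rg (a + b)" using gd unfolding graded_domain_def by metis
lemma gd_uniq: "hom_family Rg h \<Longrightarrow> hsum h = 0 \<Longrightarrow> h b = 0" using gd unfolding graded_domain_def by metis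
lemma gd_R: "R = {hsum h | h. hom_family Rg h}" using gd unfolding graded_domain_def by metis
lemma gd_1: "1 \<in> R" using gd unfolding graded_domain_def by metis

lemma hom_familyD: "hom_family Rg h \<Longrightarrow> h b \<in> Rg b" "hom_family Rg h \<Longrightarrow> finite (supp h)"
  unfolding hom_family_def supp_def by auto

lemma hom_familyI: "(\<And>b. h b \<in> Rg b) \<Longrightarrow> finite (supp h) \<Longrightarrow> hom_family Rg h"
  unfolding hom_family_def supp_def by auto

lemma hsum_sup: "finite S \<Longrightarrow> supp h \<subseteq> S \<Longrightarrow> hsum h = (\<Sum>b\<in>S. h b)"
  unfolding hsum_def
  by (rule sum.mono_neutral_left) (auto simp: supp_def)

lemma Rg_sum: "(\<And>x. x \<in> A \<Longrightarrow> f x \<in> Rg c) \<Longrightarrow> sum f A \<in> Rg c"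
  by (induct A rule: infinite_finite_induct) (auto intro: gd0 gd_add)

lemma hom_group:
  assumes P: "finite P" and v: "\<And>x. x \<in> P \<Longrightarrow> v x \<in> Rg (d x)"
  shows "hom_family Rg (\<lambda>c. \<Sum>x\<in>{x\<in>P. d x = c}. v x)"
    "hsum (\<lambda>c. \<Sum>x\<in>{x\<in>P. d x = c}. v x) = (\<Sum>x\<in>P. v x)"
proof -
  let ?h = "\<lambda>c. \<Sum>x\<in>{x\<in>P. d x = c}. v x"
  have sub: "supp ?h \<subseteq> d ` P"
  proof
    fix c assume "c \<in> supp ?h"
    then have "?h c \<noteq> 0" by (simp add: supp_def)
    then have "{x\<in>P. d x = c} \<noteq> {}" by (metis sum.empty)
    then show "c \<in> d ` P" by blast
  qed
  have fin: "finite (supp ?h)" using finite_subset[OF sub] P by simp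
  show "hom_family Rg ?h"
  proof (rule hom_familyI[OF _ fin])
    fix c show "?h c \<in> Rg c" by (rule Rg_sum) (use v in auto)
  qed
  have "hsum ?h = (\<Sum>c\<in>d ` P. ?h c)" by (rule hsum_sup[OF _ sub]) (use P in simp)
  also have "\<dots> = (\<Sum>x\<in>P. v x)" by (rule sum.group[OF P]) (use P in auto)
  finally show "hsum ?h = (\<Sum>x\<in>P. v x)" .
qed

lemma hom_diff:
  assumes "hom_family Rg h1" "hom_family Rg h2"
  shows "hom_family Rg (\<lambda>b. h1 b - h2 b)" "hsum (\<lambda>b. h1 b - h2 b) = hsum h1 - hsum h2"
proof -
  let ?S = "supp h1 \<union> supp h2"
  have fin: "finite ?S" using hom_familyD(2)[OF assms(1)] hom_familyD(2)[OF assms(2)] by simp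
  have sub: "supp (\<lambda>b. h1 b - h2 b) \<subseteq> ?S" by (auto simp: supp_def)
  show "hom_family Rg (\<lambda>b. h1 b - h2 b)"
  proof (rule hom_familyI)
    fix b show "h1 b - h2 b \<in> Rg b"
      using gd_add[OF hom_familyD(1)[OF assms(1)] gd_neg[OF hom_familyD(1)[OF assms(2)]]] by simp
  next
    show "finite (supp (\<lambda>b. h1 b - h2 b))" using finite_subset[OF sub fin] .
  qed
  have "hsum (\<lambda>b. h1 b - h2 b) = (\<Sum>b\<in>?S. h1 b - h2 b)" by (rule hsum_sup[OF fin sub])
  also have "\<dots> = (\<Sum>b\<in>?S. h1 b) - (\<Sum>b\<in>?S. h2 b)" by (simp add: sum_subtractf)
  also have "(\<Sum>b\<in>?S. h1 b) = hsum h1" by (rule hsum_sup[symmetric, OF fin]) blast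
  also have "(\<Sum>b\<in>?S. h2 b) = hsum h2" by (rule hsum_sup[symmetric, OF fin]) blast
  finally show "hsum (\<lambda>b. h1 b - h2 b) = hsum h1 - hsum h2" .
qed

lemma hom_uniq:
  assumes "hom_family Rg h1" "hom_family Rg h2" "hsum h1 = hsum h2"
  shows "h1 b = h2 b"
proof -
  have "hsum (\<lambda>b. h1 b - h2 b) = 0" using hom_diff(2)[OF assms(1,2)] assms(3) by simp
  then have "h1 b - h2 b = 0" using gd_uniq[OF hom_diff(1)[OF assms(1,2)]] by blast
  then show ?thesis by simp
qed

lemma hcomp_eq:
  assumes h: "hom_family Rg h" shows "hcomp Rg (hsum h) a = h a"
  unfolding hcomp_def
proof (rule the_equality)
  show "\<exists>h'. hom_family Rg h' \<and> hsum h = hsum h' \<and> h a = h' a" using h by blast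
next
  fix x assume "\<exists>h'. hom_family Rg h' \<and> hsum h = hsum h' \<and> x = h' a"
  then obtain h' where "hom_family Rg h'" "hsum h = hsum h'" "x = h' a" by blast
  then show "x = h a" using hom_uniq[OF h] by metis
qed

lemma R_decomp:
  assumes "x \<in> R" shows "hom_family Rg (hcomp Rg x)" "x = hsum (hcomp Rg x)"
proof -
  obtain h where h: "hom_family Rg h" "x = hsum h" using assms gd_R by blast
  have e: "hcomp Rg x = h" using hcomp_eq[OF h(1)] h(2) by (intro ext) simp
  show "hom_family Rg (hcomp Rg x)" "x = hsum (hcomp Rg x)" using h e by simp_all
qed

lemma hom_R: "hom_family Rg h \<Longrightarrow> hsum h \<in> R"
  using gd_R by blast

lemma Rg_R: assumes x: "x \<in> Rg a" shows "x \<in> R"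
proof -
  let ?h = "\<lambda>b. if b = a then x else 0"
  have sub: "supp ?h \<subseteq> {a}" by (auto simp: supp_def)
  have hf: "hom_family Rg ?h"
    by (rule hom_familyI) (use x gd0 finite_subset[OF sub] in auto)
  have "hsum ?h = x" using hsum_sup[OF _ sub] by simp
  then show ?thesis using hom_R[OF hf] by simp
qed

lemma hcomp_R: "x \<in> R \<Longrightarrow> hcomp Rg x a \<in> R"
  using Rg_R hom_familyD(1)[OF R_decomp(1)] by blast

lemma hcomp_Rg: "x \<in> R \<Longrightarrow> hcomp Rg x a \<in> Rg a"
  using hom_familyD(1)[OF R_decomp(1)] by blast

lemma hcomp_0: "hcomp Rg 0 a = 0"
proof -
  have hf: "hom_family Rg (\<lambda>_. 0)" by (rule hom_familyI) (auto simp: gd0 supp_def)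
  have "hsum (\<lambda>_::'g. (0::'k)) = 0" by (simp add: hsum_def)
  moreover have "hcomp Rg (hsum (\<lambda>_::'g. (0::'k))) a = 0" using hcomp_eq[OF hf] .
  ultimately show ?thesis by simp
qed

lemma hom_zero: "hom_family Rg (\<lambda>_. 0)" by (rule hom_familyI) (auto simp: gd0 supp_def)

lemma sub_R: assumes x: "x \<in> R" and z: "z \<in> R" shows "x - z \<in> R"
  using hom_R[OF hom_diff(1)[OF R_decomp(1)[OF x] R_decomp(1)[OF z]]]
      hom_diff(2)[OF R_decomp(1)[OF x] R_decomp(1)[OF z]] R_decomp(2)[OF x] R_decomp(2)[OF z] by simp

lemma neg_R: assumes y: "y \<in> R" shows "- y \<in> R"
  using sub_R[OF Rg_R[OF gd0] y] by simp

lemma subrR: "subr R"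
  unfolding subr_def
proof (intro conjI ballI)
  show "0 \<in> R" using Rg_R[OF gd0] .
  show "1 \<in> R" by (rule gd_1)
next
  fix x y assume x: "x \<in> R" and y: "y \<in> R"
  note hx = R_decomp[OF x] and hy = R_decomp[OF y]
  have "x + y = x - (- y)" by simp
  then show "x + y \<in> R" using sub_R[OF x neg_R[OF y]] by simp
  show "- x \<in> R" by (rule neg_R[OF x])
  let ?P = "supp (hcomp Rg x) \<times> supp (hcomp Rg y)"
  have P: "finite ?P" using hom_familyD(2)[OF hx(1)] hom_familyD(2)[OF hy(1)] by simp
  have v: "\<And>p. p \<in> ?P \<Longrightarrow> hcomp Rg x (fst p) * hcomp Rg y (snd p) \<in> Rg (fst p + snd p)"
    by (rule gd_mult) (auto intro: hom_familyD(1)[OF hx(1)] hom_familyD(1)[OF hy(1)])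
  have "x * y = (\<Sum>a\<in>supp (hcomp Rg x). hcomp Rg x a) * (\<Sum>b\<in>supp (hcomp Rg y). hcomp Rg y b)"
    using hx(2) hy(2) by (simp add: hsum_def supp_def)
  also have "\<dots> = (\<Sum>p\<in>?P. hcomp Rg x (fst p) * hcomp Rg y (snd p))"
    by (simp add: sum_product sum.cartesian_product case_prod_beta)
  finally have "x * y = (\<Sum>p\<in>?P. hcomp Rg x (fst p) * hcomp Rg y (snd p))" .
  then show "x * y \<in> R" using hom_R[OF hom_group(1)[OF P v]] hom_group(2)[OF P v] by simp
qed

end

definition Fam :: "('g \<Rightarrow> 'k::field set) \<Rightarrow> 'k poly \<Rightarrow> nat \<times> 'g \<Rightarrow> 'k" where
  "Fam Rg f = (\<lambda>p. hcomp Rg (coeff f (fst p)) (snd p))"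

context
  fixes Rg :: "'g::cancel_comm_monoid_add \<Rightarrow> 'k::field set" and R :: "'k set"
  assumes gd: "graded_domain Rg R"
begin

lemma RpolyD: "f \<in> Rpoly R \<Longrightarrow> coeff f i \<in> R" unfolding Rpoly_def by blast

lemma fam_R: "f \<in> Rpoly R \<Longrightarrow> Fam Rg f p \<in> R"
  unfolding Fam_def by (rule hcomp_R[OF gd RpolyD])

lemma fam_Rg: "f \<in> Rpoly R \<Longrightarrow> Fam Rg f p \<in> Rg (snd p)"
  unfolding Fam_def by (rule hcomp_Rg[OF gd RpolyD])

lemma fam_fin: assumes f: "f \<in> Rpoly R" shows "finite (supp (Fam Rg f))"
proof -
  have sub: "supp (Fam Rg f) \<subseteq> (\<Union>i\<in>{..degree f}. {i} \<times> supp (hcomp Rg (coeff f i)))"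
  proof
    fix p assume "p \<in> supp (Fam Rg f)"
    then have p: "hcomp Rg (coeff f (fst p)) (snd p) \<noteq> 0" by (simp add: supp_def Fam_def)
    have "fst p \<le> degree f"
    proof (rule ccontr)
      assume "\<not> fst p \<le> degree f"
      then have "coeff f (fst p) = 0" by (simp add: coeff_eq_0)
      then show False using p hcomp_0[OF gd] by simp
    qed
    then show "p \<in> (\<Union>i\<in>{..degree f}. {i} \<times> supp (hcomp Rg (coeff f i)))"
      using p by (cases p) (auto simp: supp_def)
  qed
  have "finite (\<Union>i\<in>{..degree f}. {i} \<times> supp (hcomp Rg (coeff f i)))"
    using hom_familyD(2)[OF gd R_decomp(1)[OF gd RpolyD[OF f]]] by blast
  then show ?thesis using finite_subset[OF sub] by blast
qed

lemma coeff_hsum: assumes f: "f \<in> Rpoly R"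
  shows "coeff f i = (\<Sum>a\<in>supp (hcomp Rg (coeff f i)). hcomp Rg (coeff f i) a)"
  using R_decomp(2)[OF gd RpolyD[OF f, of i]] unfolding hsum_def supp_def by simp

lemma poly_rep: assumes f: "f \<in> Rpoly R"
  shows "f = (\<Sum>p\<in>supp (Fam Rg f). monom (Fam Rg f p) (fst p))"
proof (rule poly_eqI)
  fix i
  let ?S = "supp (Fam Rg f)"
  let ?A = "supp (hcomp Rg (coeff f i))"
  have fin: "finite ?S" by (rule fam_fin[OF f])
  have "coeff (\<Sum>p\<in>?S. monom (Fam Rg f p) (fst p)) i = (\<Sum>p\<in>?S. if fst p = i then Fam Rg f p else 0)"
    by (simp add: coeff_sum)
  also have "\<dots> = (\<Sum>p\<in>{p\<in>?S. fst p = i}. Fam Rg f p)"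
    by (rule sum.inter_filter[OF fin, symmetric])
  also have "{p\<in>?S. fst p = i} = Pair i ` ?A"
    by (auto simp: supp_def Fam_def)
  also have "(\<Sum>p\<in>Pair i ` ?A. Fam Rg f p) = (\<Sum>a\<in>?A. Fam Rg f (i, a))"
    using sum.reindex[of "Pair i" ?A "Fam Rg f"] by (simp add: inj_on_def o_def)
  also have "\<dots> = coeff f i" using coeff_hsum[OF f, of i] by (simp add: Fam_def)
  finally show "coeff f i = coeff (\<Sum>p\<in>?S. monom (Fam Rg f p) (fst p)) i" by simp
qed

lemma coeff_prod:
  assumes f: "f \<in> Rpoly R" and g: "g \<in> Rpoly R"
  shows "coeff (f * g) k = (\<Sum>x\<in>{x\<in>supp (Fam Rg f) \<times> supp (Fam Rg g). fst (fst x) + fst (snd x) = k}.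
            Fam Rg f (fst x) * Fam Rg g (snd x))"
proof -
  let ?F = "Fam Rg f" and ?G = "Fam Rg g"
  let ?SF = "supp ?F" and ?SG = "supp ?G"
  have fin: "finite (?SF \<times> ?SG)" using fam_fin[OF f] fam_fin[OF g] by simp
  have "f * g = (\<Sum>p\<in>?SF. monom (?F p) (fst p)) * (\<Sum>q\<in>?SG. monom (?G q) (fst q))"
    using poly_rep[OF f] poly_rep[OF g] by simp
  also have "\<dots> = (\<Sum>x\<in>?SF \<times> ?SG. monom (?F (fst x) * ?G (snd x)) (fst (fst x) + fst (snd x)))"
    by (simp add: sum_product sum.cartesian_product mult_monom case_prod_beta)
  finally have "coeff (f * g) k = (\<Sum>x\<in>?SF \<times> ?SG. if fst (fst x) + fst (snd x) = k then ?F (fst x) * ?G (snd x) else 0)"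
    by (simp add: coeff_sum)
  also have "\<dots> = (\<Sum>x\<in>{x\<in>?SF \<times> ?SG. fst (fst x) + fst (snd x) = k}. ?F (fst x) * ?G (snd x))"
    by (rule sum.inter_filter[OF fin, symmetric])
  finally show ?thesis .
qed

lemma Rpoly_mult: assumes f: "f \<in> Rpoly R" and g: "g \<in> Rpoly R" shows "f * g \<in> Rpoly R"
  unfolding Rpoly_def
proof (rule CollectI, rule allI)
  fix n show "coeff (f * g) n \<in> R"
    unfolding coeff_mult
    by (rule subr_sum[OF subrR[OF gd]]) (intro subrD(4)[OF subrR[OF gd]] RpolyD f g)
qed

lemma Fam_mult:
  assumes f: "f \<in> Rpoly R" and g: "g \<in> Rpoly R"
  shows "Fam Rg (f * g) m = conv (Fam Rg f) (Fam Rg g) m"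
proof -
  obtain k c where m: "m = (k, c)" by (cases m)
  let ?F = "Fam Rg f" and ?G = "Fam Rg g"
  let ?SF = "supp ?F" and ?SG = "supp ?G"
  let ?P = "{x\<in>?SF \<times> ?SG. fst (fst x) + fst (snd x) = k}"
  let ?d = "\<lambda>x::(nat \<times> 'g) \<times> (nat \<times> 'g). snd (fst x) + snd (snd x)"
  let ?v = "\<lambda>x::(nat \<times> 'g) \<times> (nat \<times> 'g). ?F (fst x) * ?G (snd x)"
  have P: "finite ?P" using fam_fin[OF f] fam_fin[OF g] by simp
  have v: "\<And>x. x \<in> ?P \<Longrightarrow> ?v x \<in> Rg (?d x)"
    by (rule gd_mult[OF gd]) (intro fam_Rg f g)+
  have "coeff (f * g) k = hsum (\<lambda>c. \<Sum>x\<in>{x\<in>?P. ?d x = c}. ?v x)"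
    using coeff_prod[OF f g, of k] hom_group(2)[OF gd P v] by simp
  then have "hcomp Rg (coeff (f * g) k) c = (\<Sum>x\<in>{x\<in>?P. ?d x = c}. ?v x)"
    using hcomp_eq[OF gd hom_group(1)[OF gd P v]] by simp
  also have "{x\<in>?P. ?d x = c} = {x\<in>?SF \<times> ?SG. fst x + snd x = m}"
    unfolding m by (auto simp: prod_eq_iff)
  finally show ?thesis unfolding conv_def Fam_def m by simp
qed

lemma Af_gen: "Af Rg R f = gen_ideal R (range (Fam Rg f))"
proof -
  have "{hcomp Rg (coeff f i) a | i a. True} = range (Fam Rg f)"
    by (auto simp: Fam_def image_def)
  then show ?thesis unfolding Af_def by simp
qed

lemma Af_R: "f \<in> Rpoly R \<Longrightarrow> Af Rg R f \<subseteq> R"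
  unfolding Af_gen by (rule gen_R[OF subrR[OF gd]]) (use fam_R in blast)

lemma Af_idl: "f \<in> Rpoly R \<Longrightarrow> idl R (Af Rg R f)"
  unfolding Af_gen by (rule gen_idl[OF subrR[OF gd]]) (use fam_R in blast)

lemma coeff_Af: assumes f: "f \<in> Rpoly R" shows "coeff f i \<in> Af Rg R f"
proof -
  have "(\<Sum>a\<in>supp (hcomp Rg (coeff f i)). hcomp Rg (coeff f i) a) \<in> Af Rg R f"
    unfolding Af_gen
  proof (rule rmod_sum[OF gen_rmod[OF subrR[OF gd]]])
    fix a show "hcomp Rg (coeff f i) a \<in> gen_ideal R (range (Fam Rg f))"
      by (rule gen_incl[OF subrR[OF gd]]) (auto simp: Fam_def image_def)
  qed
  then show ?thesis using coeff_hsum[OF f, of i] by simp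
qed

lemma nz_Af: assumes f: "f \<in> Rpoly R" and f0: "f \<noteq> 0" shows "nz_submod R (Af Rg R f)"
proof -
  have "coeff f (degree f) \<noteq> 0" using f0 by simp
  then obtain a where a: "hcomp Rg (coeff f (degree f)) a \<noteq> 0"
    using coeff_hsum[OF f, of "degree f"] by (metis (no_types, lifting) sum.neutral)
  have "Fam Rg f (degree f, a) \<in> range (Fam Rg f)" by simp
  moreover have "Fam Rg f (degree f, a) \<noteq> 0" using a by (simp add: Fam_def)
  ultimately show ?thesis unfolding Af_gen by (rule nz_gen[OF subrR[OF gd]])
qed

end

lemma nsmul_nat: "nsmul n (i::nat) = n * i" by (induct n) simp_all

lemma nsmul_prod: "nsmul n (x :: 'a::comm_monoid_add \<times> 'b::comm_monoid_add) = (nsmul n (fst x), nsmul n (snd x))"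
  by (induct n) (simp_all add: prod_eq_iff)

lemma tf_prod:
  assumes "torsion_free_quotient TYPE('g::cancel_comm_monoid_add)"
  shows "\<forall>(n::nat) (a::nat \<times> 'g) b. n > 0 \<longrightarrow> nsmul n a = nsmul n b \<longrightarrow> a = b"
proof (intro allI impI)
  fix n :: nat and a b :: "nat \<times> 'g" assume n: "n > 0" and e: "nsmul n a = nsmul n b"
  have 1: "n * fst a = n * fst b" using e by (simp add: nsmul_prod nsmul_nat)
  have 2: "nsmul n (snd a) = nsmul n (snd b)" using e by (simp add: nsmul_prod)
  have "fst a = fst b" using 1 n by simp
  moreover have "snd a = snd b" using 2 n assms unfolding torsion_free_quotient_def by blast
  ultimately show "a = b" by (simp add: prod_eq_iff)
qed

lemma conv_in_gen_left:
  assumes R: "subr R" and F: "\<And>p. F p \<in> R" and G: "\<And>q. G q \<in> R"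
  shows "conv F G m \<in> gen_ideal R (range F)"
  unfolding conv_def
proof (rule rmod_sum[OF gen_rmod[OF R]])
  fix x show "F (fst x) * G (snd x) \<in> gen_ideal R (range F)"
    using rmodD(3)[OF gen_rmod[OF R] G gen_incl[OF R rangeI]] by (simp add: mult.commute)
qed

lemma conv_in_gen_right:
  assumes R: "subr R" and F: "\<And>p. F p \<in> R" and G: "\<And>q. G q \<in> R"
  shows "conv F G m \<in> gen_ideal R (range G)"
  unfolding conv_def
proof (rule rmod_sum[OF gen_rmod[OF R]])
  fix x show "F (fst x) * G (snd x) \<in> gen_ideal R (range G)"
    using rmodD(3)[OF gen_rmod[OF R] F gen_incl[OF R rangeI]] by simp
qed

theorem lemma2p2:
  fixes Rg :: "'g::cancel_comm_monoid_add \<Rightarrow> 'k::field set"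
    and R :: "'k set" and st :: "'k set \<Rightarrow> 'k set"
  assumes "torsion_free_quotient TYPE('g)"
    and "graded_domain Rg R"
    and "semistar R st"
  shows "saturated_mult_closed (Rpoly R) (Nstar Rg R st)"
proof -
  note gd = assms(2) and ss = assms(3)
  have R: "subr R" by (rule subrR[OF gd])
  obtain r :: "((nat \<times> 'g) \<times> (nat \<times> 'g)) set" where g: "goodrel r" and tot: "\<forall>a b. (a,b)\<in>r \<or> (b,a)\<in>r"
    using exists_total_goodrel[OF tf_prod[OF assms(1)]] by blast
  have nR: "nz_submod R R" by (rule nzR[OF R])
  have Nsub: "Nstar Rg R st \<subseteq> Rpoly R" unfolding Nstar_def by blast
  have one: "1 \<in> Nstar Rg R st"
  proof -
    have 1: "1 \<in> Rpoly R" unfolding Rpoly_def using subrD(1,2)[OF R] by (simp add: coeff_1)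
    have "Af Rg R 1 = R"
    proof
      show "Af Rg R 1 \<subseteq> R" by (rule Af_R[OF gd 1])
      show "R \<subseteq> Af Rg R 1"
      proof
        fix x assume x: "x \<in> R"
        have c1: "(1::'k) \<in> Af Rg R 1" using coeff_Af[OF gd 1, of 0] by simp
        have "x * 1 \<in> Af Rg R 1" unfolding Af_gen[OF gd]
          by (rule rmodD(3)[OF gen_rmod[OF R] x c1[unfolded Af_gen[OF gd]]])
        then show "x \<in> Af Rg R 1" by simp
      qed
    qed
    then show ?thesis unfolding Nstar_def using 1 by simp
  qed
  have main: "f * h \<in> Nstar Rg R st \<longleftrightarrow> f \<in> Nstar Rg R st \<and> h \<in> Nstar Rg R st"
    if f: "f \<in> Rpoly R" and h: "h \<in> Rpoly R" for f h
  proof -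
    let ?F = "Fam Rg f" and ?G = "Fam Rg h"
    have fh: "f * h \<in> Rpoly R" by (rule Rpoly_mult[OF gd f h])
    have FR: "\<And>p. ?F p \<in> R" by (rule fam_R[OF gd f])
    have GR: "\<And>p. ?G p \<in> R" by (rule fam_R[OF gd h])
    have Afh: "Af Rg R (f * h) = gen_ideal R (range (conv ?F ?G))"
      unfolding Af_gen[OF gd] using Fam_mult[OF gd f h] by (metis ext)
    have sub1: "Af Rg R (f * h) \<subseteq> Af Rg R f"
      unfolding Afh Af_gen[OF gd, of f]
      by (rule gen_sub[OF gen_rmod[OF R]]) (rule subsetI, elim rangeE, simp only: conv_in_gen_left[OF R FR GR])
    have sub2: "Af Rg R (f * h) \<subseteq> Af Rg R h"
      unfolding Afh Af_gen[OF gd, of h]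
      by (rule gen_sub[OF gen_rmod[OF R]]) (rule subsetI, elim rangeE, simp only: conv_in_gen_right[OF R FR GR])
    show ?thesis
    proof
      assume N: "f * h \<in> Nstar Rg R st"
      then have fh0: "f * h \<noteq> 0" and e: "st (Af Rg R (f * h)) = st R" unfolding Nstar_def by auto
      then have f0: "f \<noteq> 0" and h0: "h \<noteq> 0" by auto
      have nfh: "nz_submod R (Af Rg R (f * h))" by (rule nz_Af[OF gd fh fh0])
      have nf: "nz_submod R (Af Rg R f)" by (rule nz_Af[OF gd f f0])
      have nh: "nz_submod R (Af Rg R h)" by (rule nz_Af[OF gd h h0])
      have a1: "st (Af Rg R (f * h)) \<subseteq> st (Af Rg R f)" by (rule st_mono[OF R ss nfh nf sub1])
      have a2: "st (Af Rg R f) \<subseteq> st R" by (rule st_mono[OF R ss nf nR Af_R[OF gd f]])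
      have b1: "st (Af Rg R (f * h)) \<subseteq> st (Af Rg R h)" by (rule st_mono[OF R ss nfh nh sub2])
      have b2: "st (Af Rg R h) \<subseteq> st R" by (rule st_mono[OF R ss nh nR Af_R[OF gd h]])
      have "st (Af Rg R f) = st R" using a1 a2 e by blast
      moreover have "st (Af Rg R h) = st R" using b1 b2 e by blast
      ultimately show "f \<in> Nstar Rg R st \<and> h \<in> Nstar Rg R st"
        unfolding Nstar_def using f h f0 h0 by simp
    next
      assume N: "f \<in> Nstar Rg R st \<and> h \<in> Nstar Rg R st"
      then have f0: "f \<noteq> 0" and h0: "h \<noteq> 0" and ef: "st (Af Rg R f) = st R"
        and eh: "st (Af Rg R h) = st R" unfolding Nstar_def by auto
      have fh0: "f * h \<noteq> 0" using f0 h0 by simp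
      let ?I = "Af Rg R (f * h)"
      have I: "idl R ?I" by (rule Af_idl[OF gd fh])
      have nI: "nz_submod R ?I" by (rule nz_Af[OF gd fh fh0])
      have nf: "nz_submod R (Af Rg R f)" by (rule nz_Af[OF gd f f0])
      have nh: "nz_submod R (Af Rg R h)" by (rule nz_Af[OF gd h h0])
      define T where "T = range (\<lambda>x. ?F (fst x) * ?G (snd x))"
      have finF: "finite (supp ?F)" by (rule fam_fin[OF gd f])
      have finG: "finite (supp ?G)" by (rule fam_fin[OF gd h])
      have Tsub: "T \<subseteq> insert 0 ((\<lambda>x. ?F (fst x) * ?G (snd x)) ` (supp ?F \<times> supp ?G))"
        unfolding T_def by (auto simp: supp_def)
      have Tfin: "finite T" by (rule finite_subset[OF Tsub]) (use finF finG in simp)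
      have TR: "T \<subseteq> R" unfolding T_def using subrD(4)[OF R FR GR] by blast
      have convI: "\<forall>m. conv ?F ?G m \<in> ?I"
        unfolding Afh using gen_incl[OF R] by blast
      have Trad: "\<forall>t\<in>T. \<exists>N. t^N \<in> ?I"
      proof
        fix t assume "t \<in> T"
        then obtain p q where t: "t = ?F p * ?G q" unfolding T_def by auto
        have "\<exists>N. (?F p * ?G q) ^ N \<in> ?I"
          by (rule gauss_outer[OF g tot R I finF le_refl _ finG _ convI]) (use FR GR in blast)+
        then show "\<exists>N. t^N \<in> ?I" using t by simp
      qed
      obtain p0 where p0: "?F p0 \<noteq> 0"
        using nz_gen_ex[OF nf[unfolded Af_gen[OF gd]]] by blast
      obtain q0 where q0: "?G q0 \<noteq> 0"
        using nz_gen_ex[OF nh[unfolded Af_gen[OF gd]]] by blast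
      have t0: "?F p0 * ?G q0 \<in> T" "?F p0 * ?G q0 \<noteq> 0"
        unfolding T_def using p0 q0 by (auto intro: range_eqI[of _ _ "(p0, q0)"])
      have nT: "nz_submod R (gen_ideal R ({} \<union> T))" using nz_gen[OF R t0] by simp
      have fT: "st R \<subseteq> st (gen_ideal R ({} \<union> T))"
      proof -
        have "st R \<subseteq> st (gen_ideal R T)"
        proof (rule key_L[OF R ss _ _ _ _ _ _ _])
          show "range ?F \<subseteq> R" using FR by blast
          show "range ?G \<subseteq> R" using GR by blast
          show "nz_submod R (gen_ideal R (range ?F))" using nf unfolding Af_gen[OF gd] .
          show "nz_submod R (gen_ideal R (range ?G))" using nh unfolding Af_gen[OF gd] .
          show "st R \<subseteq> st (gen_ideal R (range ?F))" using ef unfolding Af_gen[OF gd] by simp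
          show "st R \<subseteq> st (gen_ideal R (range ?G))" using eh unfolding Af_gen[OF gd] by simp
          show "nz_submod R (gen_ideal R T)" using nT by simp
        next
          fix s t assume "s \<in> range ?F" "t \<in> range ?G"
          then obtain p q where "s = ?F p" "t = ?G q" by blast
          then have "s * t \<in> T" unfolding T_def by (auto intro: range_eqI[of _ _ "(p, q)"])
          then show "s * t \<in> gen_ideal R T" by (rule gen_incl[OF R])
        qed
        then show ?thesis by simp
      qed
      have "st R \<subseteq> st ?I"
        by (rule rad_full[OF R ss I nI Tfin TR _ Trad nT fT]) simp
      moreover have "st ?I \<subseteq> st R" by (rule st_mono[OF R ss nI nR Af_R[OF gd fh]])
      ultimately have "st ?I = st R" by blast
      then show "f * h \<in> Nstar Rg R st" unfolding Nstar_def using fh fh0 by simp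
    qed
  qed
  show ?thesis unfolding saturated_mult_closed_def using Nsub one main by blast
qed

end
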